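(* Let $G\le \mathrm{Homeo}_+(\mathbb{R})$ and let $U\subseteq\mathbb{R}$ be a $G$-invariant set. Then the restricted action $G|_U$ (on the ordered set $U$) is non-Conradian if and only if there exists a two-chain $\{J_1,J_2\}$ with $(J_1\cup J_2)\cap U\neq\varnothing$ such that for each $i=1,2$, $J_i$ is a connected component of $\operatorname{supp} g_i$ for some $g_i\in G$.
   Context: For $g\in\mathrm{Homeo}_+(\mathbb{R})$, $\operatorname{supp} g=\mathbb{R}\setminus \mathrm{Fix}(g)$. A pair of open intervals $\{J_1,J_2\}$ in $\mathbb{R}$ is a two-chain if $J_1\cap J_2$ is a proper nonempty subinterval of both $J_1$ and $J_2$. For an ordered set $(\Omega,\le)$ and a group $G$ acting by order-preserving bijections of $\Omega$, two elements $f,g\in G$ are crossed if there exist $u<w<v$ in $\Omega$ such that (1) $g^n(u)<w<f^n(v)$ for all $n\in\mathbb{Z}$, and (2) there is $N\in\mathbb{Z}$ with $g^N(v)<w<f^N(u)$. The action is Conradian if there are no crossed elements. *)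

theory Defs
  imports "HOL-Analysis.Analysis"
begin

definition homeo_plus :: "(real \<Rightarrow> real) \<Rightarrow> bool" where
  "homeo_plus g \<longleftrightarrow> homeomorphism UNIV UNIV g (inv g) \<and> strict_mono g"

definition homeo_subgroup :: "(real \<Rightarrow> real) set \<Rightarrow> bool" where
  "homeo_subgroup G \<longleftrightarrow> (\<forall>g\<in>G. homeo_plus g) \<and> id \<in> G \<and>
     (\<forall>f\<in>G. \<forall>g\<in>G. f \<circ> g \<in> G) \<and> (\<forall>g\<in>G. inv g \<in> G)"

definition ipow :: "(real \<Rightarrow> real) \<Rightarrow> int \<Rightarrow> (real \<Rightarrow> real)" where
  "ipow g n = (if 0 \<le> n then g ^^ nat n else (inv g) ^^ nat (- n))"

definition supp :: "(real \<Rightarrow> real) \<Rightarrow> real set" where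
  "supp g = {x. g x \<noteq> x}"

definition G_invariant :: "(real \<Rightarrow> real) set \<Rightarrow> real set \<Rightarrow> bool" where
  "G_invariant G U \<longleftrightarrow> (\<forall>g\<in>G. g ` U = U)"

definition open_interval :: "real set \<Rightarrow> bool" where
  "open_interval J \<longleftrightarrow> open J \<and> is_interval J \<and> J \<noteq> {}"

definition two_chain :: "real set \<Rightarrow> real set \<Rightarrow> bool" where
  "two_chain J1 J2 \<longleftrightarrow> open_interval J1 \<and> open_interval J2 \<and>
     J1 \<inter> J2 \<noteq> {} \<and> J1 \<inter> J2 \<subset> J1 \<and> J1 \<inter> J2 \<subset> J2"

definition crossed_on :: "real set \<Rightarrow> (real \<Rightarrow> real) \<Rightarrow> (real \<Rightarrow> real) \<Rightarrow> bool" where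
  "crossed_on U f g \<longleftrightarrow> (\<exists>u\<in>U. \<exists>w\<in>U. \<exists>v\<in>U. u < w \<and> w < v \<and>
     (\<forall>n::int. ipow g n u < w \<and> w < ipow f n v) \<and>
     (\<exists>N::int. ipow g N v < w \<and> w < ipow f N u))"

definition conradian_on :: "(real \<Rightarrow> real) set \<Rightarrow> real set \<Rightarrow> bool" where
  "conradian_on G U \<longleftrightarrow> \<not> (\<exists>f\<in>G. \<exists>g\<in>G. crossed_on U f g)"

end

theory Submission
  imports Defs
begin

lemma hp_basic:
  assumes "homeo_plus h"
  shows "bij h" "continuous_on UNIV h" "continuous_on UNIV (inv h)"
    "\<And>x. h (inv h x) = x" "\<And>x. inv h (h x) = x" "strict_mono h" "strict_mono (inv h)"
proof -
  have hm: "homeomorphism UNIV UNIV h (inv h)" and sm: "strict_mono h"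
    using assms unfolding homeo_plus_def by auto
  show "continuous_on UNIV h" "continuous_on UNIV (inv h)"
    using hm unfolding homeomorphism_def by auto
  show hi: "\<And>x. h (inv h x) = x" "\<And>x. inv h (h x) = x"
    using hm unfolding homeomorphism_def by auto
  show "bij h" using hi by (metis bijI' )
  show "strict_mono h" by (rule sm)
  show "strict_mono (inv h)"
  proof (rule strict_mono_inv[OF sm])
    show "surj h" using hi(1) by (rule surjI)
    show "\<And>x. inv h (h x) = x" by (rule hi(2))
  qed
qed

lemma funpow_strict_mono: fixes f :: "real \<Rightarrow> real" shows "strict_mono f \<Longrightarrow> strict_mono (f ^^ k)"
  unfolding strict_mono_def
proof (intro allI impI)
  fix x y :: real assume "\<forall>x y. x < y \<longrightarrow> f x < f y" "x < y"
  then show "(f ^^ k) x < (f ^^ k) y" by (induction k) (auto simp: funpow_0)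
qed

lemma ipow_strict_mono: "homeo_plus h \<Longrightarrow> strict_mono (ipow h n)"
  unfolding ipow_def using hp_basic(6,7)[of h] funpow_strict_mono by auto

lemma ipow_mono_le: "homeo_plus h \<Longrightarrow> a \<le> b \<Longrightarrow> ipow h n a \<le> ipow h n b"
  using ipow_strict_mono strict_mono_leD by blast

lemma ipow_mono_less: "homeo_plus h \<Longrightarrow> a < b \<Longrightarrow> ipow h n a < ipow h n b"
  using ipow_strict_mono strict_monoD by blast

lemma funpow_fix: "f x = x \<Longrightarrow> (f ^^ k) x = x"
  by (induction k) auto

lemma ipow_fix: "homeo_plus h \<Longrightarrow> h x = x \<Longrightarrow> ipow h n x = x"
  unfolding ipow_def using hp_basic(5)[of h x] funpow_fix[of h x] funpow_fix[of "inv h" x]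
  by auto

lemma ipow_one: "ipow h 1 = h"
  unfolding ipow_def by simp

lemma ipow_succ: "homeo_plus h \<Longrightarrow> h (ipow h n x) = ipow h (n+1) x"
proof -
  assume a: "homeo_plus h"
  show ?thesis
  proof (cases "0 \<le> n")
    case True
    then have "nat (n+1) = Suc (nat n)" by simp
    then show ?thesis using True unfolding ipow_def by simp
  next
    case False
    then have e: "nat (-n) = Suc (nat (-(n+1)))" by simp
    show ?thesis
    proof (cases "n = -1")
      case True then show ?thesis unfolding ipow_def using hp_basic(4)[OF a] by simp
    next
      case False2: False
      then have "\<not> 0 \<le> n+1" using False by simp
      then show ?thesis using False e unfolding ipow_def
        by (simp add: funpow_Suc_right[symmetric] hp_basic(4)[OF a] del: funpow.simps)
           (simp add: hp_basic(4)[OF a])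
    qed
  qed
qed

lemma ipow_pred: "homeo_plus h \<Longrightarrow> inv h (ipow h n x) = ipow h (n-1) x"
  by (metis diff_add_cancel hp_basic(5) ipow_succ)

lemma ipow_G: assumes "homeo_subgroup G" "g \<in> G" shows "ipow g n \<in> G"
proof -
  have cl: "\<And>f h. f \<in> G \<Longrightarrow> h \<in> G \<Longrightarrow> f \<circ> h \<in> G" "id \<in> G" "inv g \<in> G"
    using assms unfolding homeo_subgroup_def by auto
  have "\<And>f k. f \<in> G \<Longrightarrow> f ^^ k \<in> G"
  proof -
    fix f k assume f: "f \<in> G" show "f ^^ k \<in> G"
      apply (induction k) apply (simp add: cl(2)[unfolded id_def]) by (metis cl(1) f funpow.simps(2))
  qed
  then show ?thesis unfolding ipow_def using assms cl by auto
qed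

lemma ipow_U: assumes "homeo_plus h" "h ` U = U" "inv h ` U = U" "x \<in> U"
  shows "ipow h n x \<in> U"
proof -
  have "\<And>f k. f ` U = U \<Longrightarrow> x \<in> U \<Longrightarrow> (f ^^ k) x \<in> U"
  proof -
    fix f :: "real \<Rightarrow> real" and k assume f: "f ` U = U" "x \<in> U"
    show "(f ^^ k) x \<in> U" by (induction k) (use f in auto)
  qed
  then show ?thesis unfolding ipow_def using assms by auto
qed

lemma supp_open: "homeo_plus h \<Longrightarrow> open (supp h)"
  unfolding supp_def using hp_basic(2) by (intro open_Collect_neq) auto

lemma comp_props:
  assumes "homeo_plus h" "x \<in> supp h"
  shows "open (connected_component_set (supp h) x)" "is_interval (connected_component_set (supp h) x)"
    "connected_component_set (supp h) x \<subseteq> supp h" "x \<in> connected_component_set (supp h) x"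
proof -
  show "open (connected_component_set (supp h) x)"
    using assms(1) supp_open open_connected_component by blast
  show "is_interval (connected_component_set (supp h) x)"
    using is_interval_connected_1 connected_connected_component by blast
  show "connected_component_set (supp h) x \<subseteq> supp h" by (rule connected_component_subset)
  show "x \<in> connected_component_set (supp h) x" using assms(2) by simp
qed

lemma ipow_zero: "ipow h 0 = id"
  unfolding ipow_def by simp

lemma orbit_above:
  assumes h: "homeo_plus h" and p: "p \<in> supp h" and y: "y \<in> connected_component_set (supp h) p"
  shows "\<exists>n. ipow h n p > y"
proof (rule ccontr)
  assume "\<not> ?thesis"
  then have le: "\<And>n. ipow h n p \<le> y" by (simp add: not_less)
  define A where "A = range (\<lambda>n. ipow h n p)"
  define S where "S = Sup A"
  have bdd: "bdd_above A" unfolding A_def using le by (intro bdd_aboveI[of _ y]) auto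
  have ne: "A \<noteq> {}" unfolding A_def by simp
  have pA: "p \<in> A" unfolding A_def by (metis ipow_zero id_apply rangeI)
  have pS: "p \<le> S" unfolding S_def using bdd pA cSup_upper by blast
  have Sy: "S \<le> y" unfolding S_def A_def using le by (auto intro!: cSup_least)
  have mh: "mono h" "mono (inv h)" using hp_basic(6,7)[OF h] strict_mono_mono by auto
  have "S \<le> h S" unfolding S_def
  proof (rule cSup_least[OF ne])
    fix a assume "a \<in> A"
    then obtain n where a: "a = ipow h n p" unfolding A_def by auto
    have "inv h a \<in> A" unfolding A_def a ipow_pred[OF h] by simp
    then have "inv h a \<le> Sup A" using bdd cSup_upper by blast
    then have "h (inv h a) \<le> h (Sup A)" using mh(1) monoD by blast
    then show "a \<le> h (Sup A)" using hp_basic(4)[OF h] by simp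
  qed
  moreover have "S \<le> inv h S" unfolding S_def
  proof (rule cSup_least[OF ne])
    fix a assume "a \<in> A"
    then obtain n where a: "a = ipow h n p" unfolding A_def by auto
    have "h a \<in> A" unfolding A_def a ipow_succ[OF h] by simp
    then have "h a \<le> Sup A" using bdd cSup_upper by blast
    then have "inv h (h a) \<le> inv h (Sup A)" using mh(2) monoD by blast
    then show "a \<le> inv h (Sup A)" using hp_basic(5)[OF h] by simp
  qed
  then have "h S \<le> h (inv h S)" using mh(1) monoD by blast
  then have "h S \<le> S" using hp_basic(4)[OF h] by simp
  ultimately have hfix: "h S = S" by simp
  have "S \<in> connected_component_set (supp h) p"
    using comp_props(2,4)[OF h p] y pS Sy unfolding is_interval_1 by blast
  then have "S \<in> supp h" using comp_props(3)[OF h p] by blast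
  then show False using hfix unfolding supp_def by simp
qed

lemma orbit_below:
  assumes h: "homeo_plus h" and p: "p \<in> supp h" and y: "y \<in> connected_component_set (supp h) p"
  shows "\<exists>n. ipow h n p < y"
proof (rule ccontr)
  assume "\<not> ?thesis"
  then have le: "\<And>n. y \<le> ipow h n p" by (simp add: not_less)
  define A where "A = range (\<lambda>n. ipow h n p)"
  define S where "S = Inf A"
  have bdd: "bdd_below A" unfolding A_def using le by (intro bdd_belowI[of _ y]) auto
  have ne: "A \<noteq> {}" unfolding A_def by simp
  have pA: "p \<in> A" unfolding A_def by (metis ipow_zero id_apply rangeI)
  have pS: "S \<le> p" unfolding S_def using bdd pA cInf_lower by blast
  have Sy: "y \<le> S" unfolding S_def A_def using le by (auto intro!: cInf_greatest)
  have mh: "mono h" "mono (inv h)" using hp_basic(6,7)[OF h] strict_mono_mono by auto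
  have "h S \<le> S" unfolding S_def
  proof (rule cInf_greatest[OF ne])
    fix a assume "a \<in> A"
    then obtain n where a: "a = ipow h n p" unfolding A_def by auto
    have "inv h a \<in> A" unfolding A_def a ipow_pred[OF h] by simp
    then have "Inf A \<le> inv h a" using bdd cInf_lower by blast
    then have "h (Inf A) \<le> h (inv h a)" using mh(1) monoD by blast
    then show "h (Inf A) \<le> a" using hp_basic(4)[OF h] by simp
  qed
  moreover have "inv h S \<le> S" unfolding S_def
  proof (rule cInf_greatest[OF ne])
    fix a assume "a \<in> A"
    then obtain n where a: "a = ipow h n p" unfolding A_def by auto
    have "h a \<in> A" unfolding A_def a ipow_succ[OF h] by simp
    then have "Inf A \<le> h a" using bdd cInf_lower by blast
    then have "inv h (Inf A) \<le> inv h (h a)" using mh(2) monoD by blast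
    then show "inv h (Inf A) \<le> a" using hp_basic(5)[OF h] by simp
  qed
  then have "h (inv h S) \<le> h S" using mh(1) monoD by blast
  then have "S \<le> h S" using hp_basic(4)[OF h] by simp
  ultimately have hfix: "h S = S" by simp
  have "S \<in> connected_component_set (supp h) p"
    using comp_props(2,4)[OF h p] y pS Sy unfolding is_interval_1 by blast
  then have "S \<in> supp h" using comp_props(3)[OF h p] by blast
  then show False using hfix unfolding supp_def by simp
qed

lemma orbit_in_comp:
  assumes h: "homeo_plus h" and p: "p \<in> supp h"
  shows "ipow h n p \<in> connected_component_set (supp h) p"
proof -
  define q where "q = ipow h n p"
  define T where "T = {min p q .. max p q}"
  have "T \<subseteq> supp h"
  proof
    fix x assume x: "x \<in> T"
    show "x \<in> supp h"
    proof (rule ccontr)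
      assume "x \<notin> supp h"
      then have hx: "h x = x" unfolding supp_def by simp
      then have qx: "ipow h n x = x" using ipow_fix[OF h] by blast
      have "x \<noteq> p" using p hx unfolding supp_def by auto
      moreover have "p < x \<Longrightarrow> False"
        using ipow_mono_less[OF h, of p x n] qx x unfolding T_def q_def by auto
      moreover have "x < p \<Longrightarrow> False"
        using ipow_mono_less[OF h, of x p n] qx x unfolding T_def q_def by auto
      ultimately show False by linarith
    qed
  qed
  moreover have "p \<in> T" "q \<in> T" unfolding T_def by auto
  moreover have "connected T" unfolding T_def by simp
  ultimately show ?thesis unfolding q_def[symmetric]
    using connected_component_maximal by blast
qed

lemma fixed_between:
  assumes h: "homeo_plus h" and b: "b \<in> supp h" and a: "a \<notin> connected_component_set (supp h) b"
  shows "\<exists>x. min a b \<le> x \<and> x \<le> max a b \<and> h x = x"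
proof (rule ccontr)
  assume "\<not> ?thesis"
  then have "{min a b .. max a b} \<subseteq> supp h" unfolding supp_def by auto
  moreover have "b \<in> {min a b .. max a b}" "a \<in> {min a b .. max a b}" by auto
  ultimately have "{min a b .. max a b} \<subseteq> connected_component_set (supp h) b"
    by (intro connected_component_maximal) auto
  then show False using a \<open>a \<in> {min a b .. max a b}\<close> by blast
qed

lemma ordering:
  fixes I J :: "real set"
  assumes "is_interval I" "is_interval J" "a \<in> I" "a \<notin> J" "b \<in> I" "b \<in> J" "c \<in> J" "c \<notin> I"
  shows "(a < b \<and> b < c) \<or> (c < b \<and> b < a)"
proof -
  have I: "\<And>x y z. x \<in> I \<Longrightarrow> z \<in> I \<Longrightarrow> x \<le> y \<Longrightarrow> y \<le> z \<Longrightarrow> y \<in> I"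
    using assms(1) unfolding is_interval_1 by blast
  have J: "\<And>x y z. x \<in> J \<Longrightarrow> z \<in> J \<Longrightarrow> x \<le> y \<Longrightarrow> y \<le> z \<Longrightarrow> y \<in> J"
    using assms(2) unfolding is_interval_1 by blast
  have "a \<noteq> b" "c \<noteq> b" using assms by auto
  moreover have "\<not> (a < b \<and> c < b)"
  proof
    assume h: "a < b \<and> c < b"
    show False
    proof (cases "a \<le> c")
      case True then show False using I[of a b c] h assms(3,5,8) by auto
    next
      case False then show False using J[of c b a] h assms(4,6,7) by auto
    qed
  qed
  moreover have "\<not> (a > b \<and> c > b)"
  proof
    assume h: "a > b \<and> c > b"
    show False
    proof (cases "a \<le> c")
      case True then show False using J[of b c a] h assms(4,6,7) by auto
    next
      case False then show False using I[of b a c] h assms(3,5,8) by auto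
    qed
  qed
  ultimately show ?thesis by linarith
qed

lemma G_hp: "homeo_subgroup G \<Longrightarrow> g \<in> G \<Longrightarrow> homeo_plus g"
  unfolding homeo_subgroup_def by auto

lemma G_U: "homeo_subgroup G \<Longrightarrow> G_invariant G U \<Longrightarrow> g \<in> G \<Longrightarrow> x \<in> U \<Longrightarrow> ipow g n x \<in> U"
  by (rule ipow_U[OF G_hp]) (auto simp: G_invariant_def homeo_subgroup_def)

lemma comp_oi: "homeo_plus h \<Longrightarrow> x \<in> supp h \<Longrightarrow> open_interval (connected_component_set (supp h) x)"
  unfolding open_interval_def using comp_props by blast

lemma forward:
  assumes G: "homeo_subgroup G" and fG: "f \<in> G" and gG: "g \<in> G" and cr: "crossed_on U f g"
  shows "\<exists>J1 J2. two_chain J1 J2 \<and> (J1 \<union> J2) \<inter> U \<noteq> {} \<and>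
      (\<exists>g1\<in>G. \<exists>x\<in>supp g1. J1 = connected_component_set (supp g1) x) \<and>
      (\<exists>g2\<in>G. \<exists>x\<in>supp g2. J2 = connected_component_set (supp g2) x)"
proof -
  have hf: "homeo_plus f" and hg: "homeo_plus g" using G fG gG G_hp by auto
  obtain u w v N where U: "u \<in> U" "w \<in> U" "v \<in> U" and uw: "u < w" and wv: "w < v"
    and all: "\<And>n. ipow g n u < w \<and> w < ipow f n v"
    and NN: "ipow g N v < w" "w < ipow f N u"
    using cr unfolding crossed_on_def by blast
  have wf: "w \<in> supp f"
  proof (rule ccontr)
    assume "w \<notin> supp f" then have "f w = w" unfolding supp_def by simp
    then have "ipow f N w = w" using ipow_fix[OF hf] by blast
    then show False using ipow_mono_less[OF hf uw, of N] NN by simp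
  qed
  have wg: "w \<in> supp g"
  proof (rule ccontr)
    assume "w \<notin> supp g" then have "g w = w" unfolding supp_def by simp
    then have "ipow g N w = w" using ipow_fix[OF hg] by blast
    then show False using ipow_mono_less[OF hg wv, of N] NN by simp
  qed
  define J1 where "J1 = connected_component_set (supp f) w"
  define J2 where "J2 = connected_component_set (supp g) w"
  have "{u..w} \<subseteq> supp f"
  proof
    fix x assume x: "x \<in> {u..w}"
    show "x \<in> supp f"
    proof (rule ccontr)
      assume "x \<notin> supp f" then have "f x = x" unfolding supp_def by simp
      then have "ipow f N x = x" using ipow_fix[OF hf] by blast
      then show False using ipow_mono_le[OF hf, of u x N] NN x by simp
    qed
  qed
  then have "{u..w} \<subseteq> J1" unfolding J1_def
    by (intro connected_component_maximal) (use uw in auto)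
  then have uJ1: "u \<in> J1" using uw by (meson atLeastAtMost_iff less_imp_le order_refl subsetD)
  have "{w..v} \<subseteq> supp g"
  proof
    fix x assume x: "x \<in> {w..v}"
    show "x \<in> supp g"
    proof (rule ccontr)
      assume "x \<notin> supp g" then have "g x = x" unfolding supp_def by simp
      then have "ipow g N x = x" using ipow_fix[OF hg] by blast
      then show False using ipow_mono_le[OF hg, of x v N] NN x by simp
    qed
  qed
  then have "{w..v} \<subseteq> J2" unfolding J2_def
    by (intro connected_component_maximal) (use wv in auto)
  then have vJ2: "v \<in> J2" using wv by (meson atLeastAtMost_iff less_imp_le order_refl subsetD)
  have uJ2: "u \<notin> J2"
  proof
    assume u2: "u \<in> J2"
    then have us: "u \<in> supp g" using comp_props(3)[OF hg wg] J2_def by blast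
    have "connected_component_set (supp g) u = J2" unfolding J2_def
      using u2 J2_def connected_component_eq by blast
    then have "w \<in> connected_component_set (supp g) u" using comp_props(4)[OF hg wg] J2_def by simp
    then obtain n where "ipow g n u > w" using orbit_above[OF hg us] by blast
    then show False using all[of n] by simp
  qed
  have vJ1: "v \<notin> J1"
  proof
    assume v1: "v \<in> J1"
    then have vs: "v \<in> supp f" using comp_props(3)[OF hf wf] J1_def by blast
    have "connected_component_set (supp f) v = J1" unfolding J1_def
      using v1 J1_def connected_component_eq by blast
    then have "w \<in> connected_component_set (supp f) v" using comp_props(4)[OF hf wf] J1_def by simp
    then obtain n where "ipow f n v < w" using orbit_below[OF hf vs] by blast
    then show False using all[of n] by simp
  qed
  have w1: "w \<in> J1" and w2: "w \<in> J2" using comp_props(4) hf hg wf wg J1_def J2_def by auto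
  have "two_chain J1 J2" unfolding two_chain_def
    using comp_oi[OF hf wf] comp_oi[OF hg wg] J1_def J2_def w1 w2 uJ1 uJ2 vJ1 vJ2 by blast
  moreover have "(J1 \<union> J2) \<inter> U \<noteq> {}" using w1 U by blast
  ultimately show ?thesis using fG gG wf wg J1_def J2_def by blast
qed

lemma comp_at:
  assumes h: "homeo_plus h" "z \<in> supp h" and w: "w \<in> connected_component_set (supp h) z"
  shows "w \<in> supp h" "connected_component_set (supp h) w = connected_component_set (supp h) z"
  using comp_props(3)[OF h] w connected_component_eq by blast+

lemma core:
  assumes G: "homeo_subgroup G" and GU: "G_invariant G U" and g1G: "g1 \<in> G" and g2G: "g2 \<in> G"
    and z1: "z1 \<in> supp g1" and z2: "z2 \<in> supp g2"
    and J1: "J1 = connected_component_set (supp g1) z1" and J2: "J2 = connected_component_set (supp g2) z2"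
    and x1: "x1 \<in> J1" "x1 \<notin> J2" and x2: "x2 \<in> J2" "x2 \<notin> J1"
    and w: "w \<in> U" "w \<in> J1" "w \<in> J2" and o: "x1 < w" "w < x2"
  shows "\<exists>f\<in>G. \<exists>g\<in>G. crossed_on U f g"
proof -
  have h1: "homeo_plus g1" and h2: "homeo_plus g2" using G g1G g2G G_hp by auto
  have w1: "w \<in> supp g1" "connected_component_set (supp g1) w = J1"
    using comp_at[OF h1 z1] w J1 by auto
  have w2: "w \<in> supp g2" "connected_component_set (supp g2) w = J2"
    using comp_at[OF h2 z2] w J2 by auto
  obtain a where ua: "ipow g1 a w < x1" using orbit_below[OF h1 w1(1)] x1 w1(2) by auto
  define u where "u = ipow g1 a w"
  have uU: "u \<in> U" unfolding u_def using G_U[OF G GU g1G w(1)] .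
  have uJ: "u \<in> J1" unfolding u_def using orbit_in_comp[OF h1 w1(1)] w1(2) by simp
  have u1: "u \<in> supp g1" "connected_component_set (supp g1) u = J1"
    using comp_at[OF h1 z1] uJ J1 by auto
  obtain b where fb: "ipow g1 b u > w" using orbit_above[OF h1 u1(1)] u1(2) w by auto
  define f where "f = ipow g1 b"
  obtain c where vc: "ipow g2 c w > x2" using orbit_above[OF h2 w2(1)] x2 w2(2) by auto
  define v where "v = ipow g2 c w"
  have vU: "v \<in> U" unfolding v_def using G_U[OF G GU g2G w(1)] .
  have vJ: "v \<in> J2" unfolding v_def using orbit_in_comp[OF h2 w2(1)] w2(2) by simp
  have v2: "v \<in> supp g2" "connected_component_set (supp g2) v = J2"
    using comp_at[OF h2 z2] vJ J2 by auto
  obtain d where gd: "ipow g2 d v < w" using orbit_below[OF h2 v2(1)] v2(2) w by auto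
  define g where "g = ipow g2 d"
  have fG: "f \<in> G" and gG: "g \<in> G" unfolding f_def g_def using ipow_G G g1G g2G by auto
  have hf: "homeo_plus f" and hg: "homeo_plus g" using fG gG G G_hp by auto
  obtain p where p: "min x1 w \<le> p" "p \<le> max x1 w" "g2 p = p"
    using fixed_between[OF h2 w2(1)] x1(2) w2(2) by auto
  have pw: "p \<noteq> w" using p(3) w2(1) unfolding supp_def by auto
  have gp: "g p = p" unfolding g_def using ipow_fix[OF h2 p(3)] .
  have all1: "ipow g n u < w" for n
  proof -
    have "ipow g n u \<le> ipow g n p" using ipow_mono_le[OF hg, of u p n] p o ua u_def by simp
    also have "\<dots> = p" using ipow_fix[OF hg gp] .
    finally show ?thesis using p o pw by simp
  qed
  obtain q where q: "min x2 w \<le> q" "q \<le> max x2 w" "g1 q = q"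
    using fixed_between[OF h1 w1(1)] x2(2) w1(2) by auto
  have qw: "q \<noteq> w" using q(3) w1(1) unfolding supp_def by auto
  have fq: "f q = q" unfolding f_def using ipow_fix[OF h1 q(3)] .
  have all2: "w < ipow f n v" for n
  proof -
    have "q = ipow f n q" using ipow_fix[OF hf fq] by simp
    also have "\<dots> \<le> ipow f n v" using ipow_mono_le[OF hf, of q v n] q o vc v_def by simp
    finally show ?thesis using q o qw by simp
  qed
  have "crossed_on U f g" unfolding crossed_on_def
  proof (intro bexI conjI)
    show "u < w" using ua o u_def by simp
    show "w < v" using vc o v_def by simp
    show "\<forall>n. ipow g n u < w \<and> w < ipow f n v" using all1 all2 by blast
    show "\<exists>N. ipow g N v < w \<and> w < ipow f N u"
      by (rule exI[of _ 1]) (simp add: ipow_one f_def g_def gd fb)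
  qed (use uU vU w in auto)
  then show ?thesis using fG gG by blast
qed

lemma get_w:
  assumes G: "homeo_subgroup G" and GU: "G_invariant G U" and g1G: "g1 \<in> G"
    and z1: "z1 \<in> supp g1" and J1: "J1 = connected_component_set (supp g1) z1"
    and J2i: "is_interval J2" and p: "p \<in> U" "p \<in> J1" and y: "y \<in> J1" "y \<in> J2"
    and x2: "x2 \<in> J2" "x2 \<notin> J1"
  shows "\<exists>w\<in>U. w \<in> J1 \<and> w \<in> J2"
proof (cases "p \<in> J2")
  case True then show ?thesis using p by blast
next
  case False
  have h1: "homeo_plus g1" using G g1G G_hp by auto
  have J1i: "is_interval J1" using comp_props(2)[OF h1 z1] J1 by simp
  have p1: "p \<in> supp g1" "connected_component_set (supp g1) p = J1"
    using comp_at[OF h1 z1] p J1 by auto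
  have ord: "(p < y \<and> y < x2) \<or> (x2 < y \<and> y < p)"
    using ordering[OF J1i J2i p(2) False y x2] .
  show ?thesis
  proof (cases "p < y")
    case True
    obtain n where n: "ipow g1 n p > y" using orbit_above[OF h1 p1(1)] p1(2) y by auto
    define q where "q = ipow g1 n p"
    have qU: "q \<in> U" unfolding q_def using G_U[OF G GU g1G p(1)] .
    have qJ: "q \<in> J1" unfolding q_def using orbit_in_comp[OF h1 p1(1)] p1(2) by simp
    have "q \<in> J2"
    proof (rule ccontr)
      assume "q \<notin> J2"
      then have "(q < y \<and> y < x2) \<or> (x2 < y \<and> y < q)"
        using ordering[OF J1i J2i qJ _ y x2] by blast
      then show False using n q_def ord True by auto
    qed
    then show ?thesis using qU qJ by blast
  next
    case False2: False
    obtain n where n: "ipow g1 n p < y" using orbit_below[OF h1 p1(1)] p1(2) y by auto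
    define q where "q = ipow g1 n p"
    have qU: "q \<in> U" unfolding q_def using G_U[OF G GU g1G p(1)] .
    have qJ: "q \<in> J1" unfolding q_def using orbit_in_comp[OF h1 p1(1)] p1(2) by simp
    have "q \<in> J2"
    proof (rule ccontr)
      assume "q \<notin> J2"
      then have "(q < y \<and> y < x2) \<or> (x2 < y \<and> y < q)"
        using ordering[OF J1i J2i qJ _ y x2] by blast
      then show False using n q_def ord False2 by auto
    qed
    then show ?thesis using qU qJ by blast
  qed
qed

theorem lemma2p5:
  fixes G :: "(real \<Rightarrow> real) set" and U :: "real set"
  assumes "homeo_subgroup G" and "G_invariant G U"
  shows "\<not> conradian_on G U \<longleftrightarrow>
    (\<exists>J1 J2. two_chain J1 J2 \<and> (J1 \<union> J2) \<inter> U \<noteq> {} \<and>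
      (\<exists>g1\<in>G. \<exists>x\<in>supp g1. J1 = connected_component_set (supp g1) x) \<and>
      (\<exists>g2\<in>G. \<exists>x\<in>supp g2. J2 = connected_component_set (supp g2) x))"
proof
  assume "\<not> conradian_on G U"
  then obtain f g where "f \<in> G" "g \<in> G" "crossed_on U f g" unfolding conradian_on_def by blast
  then show "\<exists>J1 J2. two_chain J1 J2 \<and> (J1 \<union> J2) \<inter> U \<noteq> {} \<and>
      (\<exists>g1\<in>G. \<exists>x\<in>supp g1. J1 = connected_component_set (supp g1) x) \<and>
      (\<exists>g2\<in>G. \<exists>x\<in>supp g2. J2 = connected_component_set (supp g2) x)"
    using forward[OF assms(1)] by blast
next
  assume "\<exists>J1 J2. two_chain J1 J2 \<and> (J1 \<union> J2) \<inter> U \<noteq> {} \<and>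
      (\<exists>g1\<in>G. \<exists>x\<in>supp g1. J1 = connected_component_set (supp g1) x) \<and>
      (\<exists>g2\<in>G. \<exists>x\<in>supp g2. J2 = connected_component_set (supp g2) x)"
  then obtain J1 J2 g1 z1 g2 z2 where tc: "two_chain J1 J2" and JU: "(J1 \<union> J2) \<inter> U \<noteq> {}"
    and g1G: "g1 \<in> G" and z1: "z1 \<in> supp g1" and J1: "J1 = connected_component_set (supp g1) z1"
    and g2G: "g2 \<in> G" and z2: "z2 \<in> supp g2" and J2: "J2 = connected_component_set (supp g2) z2"
    by blast
  have h1: "homeo_plus g1" and h2: "homeo_plus g2" using assms(1) g1G g2G G_hp by auto
  have J1i: "is_interval J1" using comp_props(2)[OF h1 z1] J1 by simp
  have J2i: "is_interval J2" using comp_props(2)[OF h2 z2] J2 by simp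
  obtain y where y: "y \<in> J1" "y \<in> J2" using tc unfolding two_chain_def by blast
  obtain x1 where x1: "x1 \<in> J1" "x1 \<notin> J2" using tc unfolding two_chain_def by blast
  obtain x2 where x2: "x2 \<in> J2" "x2 \<notin> J1" using tc unfolding two_chain_def by blast
  obtain p where p: "p \<in> U" "p \<in> J1 \<or> p \<in> J2" using JU by blast
  obtain w where w: "w \<in> U" "w \<in> J1" "w \<in> J2"
  proof (cases "p \<in> J1")
    case True
    then show ?thesis using get_w[OF assms g1G z1 J1 J2i p(1) True y x2] that by blast
  next
    case False
    then have "p \<in> J2" using p by blast
    then show ?thesis using get_w[OF assms g2G z2 J2 J1i p(1) _ y(2,1) x1] that by blast
  qed
  have "(x1 < w \<and> w < x2) \<or> (x2 < w \<and> w < x1)"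
    using ordering[OF J1i J2i x1 w(2,3) x2] .
  then have "\<exists>f\<in>G. \<exists>g\<in>G. crossed_on U f g"
  proof
    assume o: "x1 < w \<and> w < x2"
    show ?thesis using core[OF assms g1G g2G z1 z2 J1 J2 x1 x2 w] o by blast
  next
    assume o: "x2 < w \<and> w < x1"
    show ?thesis using core[OF assms g2G g1G z2 z1 J2 J1 x2 x1 w(1,3,2)] o by blast
  qed
  then show "\<not> conradian_on G U" unfolding conradian_on_def by blast
qed

end
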